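(* Let $X$ be a compact metric space and $(f_n)_{n\ge1}$ a sequence of continuous maps $X\to X$ converging uniformly to a function $\phi\colon X\to X$. Then $\phi\circ f_1^p=f_1^{p+1}$ for every $p\in\mathbb{N}^*$.
   Context: $\mathbb{N}=\{1,2,\dots\}$, $\mathbb{N}^*$ the free ultrafilters on $\mathbb{N}$. For $p\in\mathbb{N}^*$, $p\text{-}\lim_n x_n$ is the unique $y$ with $\{n:x_n\in V\}\in p$ for all neighbourhoods $V$ of $y$. $f_1^n=f_n\circ\cdots\circ f_1$, and $f_1^p(x)=p\text{-}\lim_n f_1^n(x)$ for $p\in\mathbb{N}^*$. $p+1$ is the ultrafilter $\{A\subseteq\mathbb{N}:\{m: m+1\in A\}\in p\}$. *)

theory Defs
  imports "HOL-Analysis.Analysis"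
begin

definition ultrafilter_nat :: "nat set set \<Rightarrow> bool" where
  "ultrafilter_nat p \<longleftrightarrow>
     UNIV \<in> p \<and> {} \<notin> p \<and>
     (\<forall>A B. A \<in> p \<and> B \<in> p \<longrightarrow> A \<inter> B \<in> p) \<and>
     (\<forall>A B. A \<in> p \<and> A \<subseteq> B \<longrightarrow> B \<in> p) \<and>
     (\<forall>A. A \<in> p \<or> - A \<in> p)"

text \<open>Free ultrafilters: no finite set belongs to them (the points of N*).\<close>
definition free_ultrafilter_nat :: "nat set set \<Rightarrow> bool" where
  "free_ultrafilter_nat p \<longleftrightarrow> ultrafilter_nat p \<and> (\<forall>A\<in>p. infinite A)"

definition plim :: "nat set set \<Rightarrow> (nat \<Rightarrow> 'a::topological_space) \<Rightarrow> 'a" where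
  "plim p x = (THE y. \<forall>V. open V \<and> y \<in> V \<longrightarrow> {n. x n \<in> V} \<in> p)"

definition uf_succ :: "nat set set \<Rightarrow> nat set set" where
  "uf_succ p = {A. {m. m + 1 \<in> A} \<in> p}"

fun comp_seq :: "(nat \<Rightarrow> 'a \<Rightarrow> 'a) \<Rightarrow> nat \<Rightarrow> 'a \<Rightarrow> 'a" where
  "comp_seq f 0 = id"
| "comp_seq f (Suc n) = f (Suc n) \<circ> comp_seq f n"

definition comp_ulim :: "(nat \<Rightarrow> 'a::topological_space \<Rightarrow> 'a) \<Rightarrow> nat set set \<Rightarrow> 'a \<Rightarrow> 'a" where
  "comp_ulim f p x = plim p (\<lambda>n. comp_seq f n x)"

end

theory Submission
  imports Defs
begin

definition islim :: "nat set set \<Rightarrow> (nat \<Rightarrow> 'a::topological_space) \<Rightarrow> 'a \<Rightarrow> bool" where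
  "islim p x z \<longleftrightarrow> (\<forall>V. open V \<and> z \<in> V \<longrightarrow> {n. x n \<in> V} \<in> p)"

lemma uf_not_empty:
  assumes "ultrafilter_nat p" "A \<in> p" "B \<in> p" "A \<inter> B = {}" shows False
proof -
  have "A \<inter> B \<in> p" using assms(1-3) unfolding ultrafilter_nat_def by blast
  then show False using assms(1,4) unfolding ultrafilter_nat_def by simp
qed

lemma uf_compl: "ultrafilter_nat p \<Longrightarrow> A \<notin> p \<Longrightarrow> -A \<in> p"
  unfolding ultrafilter_nat_def by metis

lemma uf_int: "ultrafilter_nat p \<Longrightarrow> A \<in> p \<Longrightarrow> B \<in> p \<Longrightarrow> A \<inter> B \<in> p"
  unfolding ultrafilter_nat_def by metis

lemma uf_mono: "ultrafilter_nat p \<Longrightarrow> A \<in> p \<Longrightarrow> A \<subseteq> B \<Longrightarrow> B \<in> p"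
  unfolding ultrafilter_nat_def by metis

lemma uf_UNIV: "ultrafilter_nat p \<Longrightarrow> UNIV \<in> p"
  unfolding ultrafilter_nat_def by metis

lemma uf_empty: "ultrafilter_nat p \<Longrightarrow> {} \<notin> p"
  unfolding ultrafilter_nat_def by metis

lemma uf_union_notin:
  assumes "ultrafilter_nat p" "A \<notin> p" "B \<notin> p" shows "A \<union> B \<notin> p"
proof
  assume h: "A \<union> B \<in> p"
  have "-A \<in> p" "-B \<in> p" using assms uf_compl by blast+
  then have "-A \<inter> -B \<in> p" using assms(1) uf_int by blast
  then show False using uf_not_empty[OF assms(1) h] by blast
qed

lemma uf_finite_union_notin:
  assumes "ultrafilter_nat p" "finite T" "\<forall>t\<in>T. g t \<notin> p" shows "(\<Union>t\<in>T. g t) \<notin> p"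
  using assms(2,3)
proof (induction T rule: finite_induct)
  case empty
  then show ?case using assms(1) unfolding ultrafilter_nat_def by auto
next
  case (insert t T)
  then show ?case using uf_union_notin[OF assms(1)] by auto
qed

lemma plim_eq:
  fixes x :: "nat \<Rightarrow> 'a::t2_space"
  assumes "ultrafilter_nat p" "islim p x z" shows "plim p x = z"
  unfolding plim_def
proof (rule the_equality)
  show "\<forall>V. open V \<and> z \<in> V \<longrightarrow> {n. x n \<in> V} \<in> p" using assms(2) unfolding islim_def .
next
  fix y assume y: "\<forall>V. open V \<and> y \<in> V \<longrightarrow> {n. x n \<in> V} \<in> p"
  show "y = z"
  proof (rule ccontr)
    assume "y \<noteq> z"
    then have "\<exists>U V. open U \<and> open V \<and> y \<in> U \<and> z \<in> V \<and> U \<inter> V = {}"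
      by (rule iffD1[OF separation_t2])
    then obtain U V where UV: "open U" "open V" "y \<in> U" "z \<in> V" "U \<inter> V = {}"
      by blast
    have 1: "{n. x n \<in> U} \<in> p" using y UV(1,3) by simp
    have 2: "{n. x n \<in> V} \<in> p" using assms(2) UV(2,4) unfolding islim_def by simp
    have 3: "{n. x n \<in> U} \<inter> {n. x n \<in> V} = {}" using UV(5) by auto
    show False by (rule uf_not_empty[OF assms(1) 1 2 3])
  qed
qed

lemma plim_exists:
  fixes x :: "nat \<Rightarrow> 'a::topological_space"
  assumes "ultrafilter_nat p" "compact X" "\<And>n. x n \<in> X"
  shows "\<exists>z\<in>X. islim p x z"
proof (rule ccontr)
  assume "\<not> ?thesis"
  then have "\<forall>z\<in>X. \<exists>V. open V \<and> z \<in> V \<and> {n. x n \<in> V} \<notin> p"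
    unfolding islim_def by blast
  then obtain W where W: "\<forall>z\<in>X. open (W z) \<and> z \<in> W z \<and> {n. x n \<in> W z} \<notin> p"
    using bchoice[of X "\<lambda>z V. open V \<and> z \<in> V \<and> {n. x n \<in> V} \<notin> p"] by blast
  have opn: "\<And>z. z \<in> X \<Longrightarrow> open (W z)" using W by blast
  have cover: "X \<subseteq> (\<Union>z\<in>X. W z)" using W by blast
  obtain C where C: "C \<subseteq> X" "finite C" "X \<subseteq> (\<Union>c\<in>C. W c)"
    by (rule compactE_image[OF assms(2) opn cover])
  have nc: "\<forall>c\<in>C. {n. x n \<in> W c} \<notin> p" using W C(1) by blast
  have "(\<Union>c\<in>C. {n. x n \<in> W c}) \<notin> p"
    by (rule uf_finite_union_notin[OF assms(1) C(2) nc])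
  moreover have "(\<Union>c\<in>C. {n. x n \<in> W c}) = UNIV"
  proof -
    have "\<exists>c\<in>C. x n \<in> W c" for n using C(3) assms(3)[of n] by blast
    then show ?thesis by blast
  qed
  ultimately show False using assms(1) uf_UNIV by auto
qed

lemma comp_seq_in:
  assumes "\<And>n. n \<ge> 1 \<Longrightarrow> f n ` X \<subseteq> X" "x \<in> X" shows "comp_seq f n x \<in> X"
  using assms by (induction n) auto

theorem theorem3p5:
  fixes X :: "'a::metric_space set"
    and f :: "nat \<Rightarrow> 'a \<Rightarrow> 'a"
    and \<phi> :: "'a \<Rightarrow> 'a"
    and p :: "nat set set"
  assumes "compact X"
    and "\<And>n. n \<ge> 1 \<Longrightarrow> continuous_on X (f n)"
    and "\<And>n. n \<ge> 1 \<Longrightarrow> f n ` X \<subseteq> X"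
    and "\<phi> ` X \<subseteq> X"
    and "uniform_limit X f \<phi> sequentially"
    and "free_ultrafilter_nat p"
  shows "\<forall>x\<in>X. \<phi> (comp_ulim f p x) = comp_ulim f (uf_succ p) x"
proof
  fix x assume x: "x \<in> X"
  have up: "ultrafilter_nat p" using assms(6) unfolding free_ultrafilter_nat_def by blast
  define y where "y n = comp_seq f n x" for n
  have yX: "y n \<in> X" for n unfolding y_def by (rule comp_seq_in[OF assms(3) x])
  have "\<exists>z\<in>X. islim p y z" by (rule plim_exists[OF up assms(1) yX])
  then obtain L where L: "L \<in> X" "islim p y L" ..
  have yeq: "(\<lambda>n. comp_seq f n x) = y" by (simp add: fun_eq_iff y_def)
  have pL: "comp_ulim f p x = L" unfolding comp_ulim_def yeq by (rule plim_eq[OF up L(2)])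
  have cont: "continuous_on X \<phi>"
  proof -
    have ev: "eventually (\<lambda>n. continuous_on X (f n)) sequentially"
      unfolding eventually_sequentially using assms(2) by blast
    show ?thesis by (rule uniform_limit_theorem[OF ev assms(5)]) simp
  qed
  have cof: "{n. n \<ge> N} \<in> p" for N
  proof -
    have "- {n. n \<ge> N} \<notin> p"
    proof
      assume "- {n. n \<ge> N} \<in> p"
      moreover have "finite (- {n. n \<ge> N})" 
      proof -
        have "- {n. n \<ge> N} = {..<N}" by auto
        then show ?thesis by simp
      qed
      ultimately show False using assms(6) unfolding free_ultrafilter_nat_def by blast
    qed
    then show ?thesis using up uf_compl by fastforce
  qed
  have lim2: "islim p (\<lambda>m. f (Suc m) (y m)) (\<phi> L)"
    unfolding islim_def
  proof (intro allI impI)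
    fix V assume V: "open V \<and> \<phi> L \<in> V"
    then obtain e where e: "e > 0" "ball (\<phi> L) e \<subseteq> V"
      using open_contains_ball by blast
    obtain d where d: "d > 0" "\<And>z. z \<in> X \<Longrightarrow> dist z L < d \<Longrightarrow> dist (\<phi> z) (\<phi> L) < e/2"
    proof -
      have "e/2 > 0" using e(1) by simp
      then show ?thesis using that cont L(1) unfolding continuous_on_iff by blast
    qed
    obtain N where N: "\<And>n. n \<ge> N \<Longrightarrow> \<forall>z\<in>X. dist (f n z) (\<phi> z) < e/2"
    proof -
      have "e/2 > 0" using e(1) by simp
      then have "eventually (\<lambda>n. \<forall>z\<in>X. dist (f n z) (\<phi> z) < e/2) sequentially"
        using assms(5) unfolding uniform_limit_iff by blast
      then show ?thesis using that unfolding eventually_sequentially by blast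
    qed
    have A: "{n. y n \<in> ball L d} \<in> p" using L(2) d(1) unfolding islim_def by (meson centre_in_ball open_ball)
    have AB: "{n. y n \<in> ball L d} \<inter> {n. n \<ge> N} \<in> p"
      using A cof up uf_int by blast
    have "{n. y n \<in> ball L d} \<inter> {n. n \<ge> N} \<subseteq> {m. f (Suc m) (y m) \<in> V}"
    proof
      fix m assume m: "m \<in> {n. y n \<in> ball L d} \<inter> {n. n \<ge> N}"
      have 1: "dist (f (Suc m) (y m)) (\<phi> (y m)) < e/2" using N[of "Suc m"] m yX by auto
      have 2: "dist (\<phi> (y m)) (\<phi> L) < e/2" using d(2)[OF yX] m by (auto simp: dist_commute)
      have "dist (f (Suc m) (y m)) (\<phi> L) < e"
        using dist_triangle[of "f (Suc m) (y m)" "\<phi> L" "\<phi> (y m)"] 1 2 by linarith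
      then show "m \<in> {m. f (Suc m) (y m) \<in> V}" using e(2) by (auto simp: dist_commute)
    qed
    then show "{m. f (Suc m) (y m) \<in> V} \<in> p" using AB up uf_mono by blast
  qed
  have uf2: "ultrafilter_nat (uf_succ p)"
    unfolding ultrafilter_nat_def
  proof (intro conjI allI impI)
    show "UNIV \<in> uf_succ p" using up uf_UNIV unfolding uf_succ_def by simp
    show "{} \<notin> uf_succ p" using up uf_empty unfolding uf_succ_def by simp
    fix A B :: "nat set"
    show "A \<in> uf_succ p \<and> B \<in> uf_succ p \<Longrightarrow> A \<inter> B \<in> uf_succ p"
    proof -
      assume h: "A \<in> uf_succ p \<and> B \<in> uf_succ p"
      have "{m. m + 1 \<in> A} \<inter> {m. m + 1 \<in> B} \<in> p"
        using h up uf_int unfolding uf_succ_def by blast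
      moreover have "{m. m + 1 \<in> A} \<inter> {m. m + 1 \<in> B} = {m. m + 1 \<in> A \<inter> B}" by blast
      ultimately show ?thesis unfolding uf_succ_def by simp
    qed
    show "A \<in> uf_succ p \<and> A \<subseteq> B \<Longrightarrow> B \<in> uf_succ p"
    proof -
      assume h: "A \<in> uf_succ p \<and> A \<subseteq> B"
      have "{m. m + 1 \<in> A} \<subseteq> {m. m + 1 \<in> B}" using h by blast
      then show ?thesis using h up uf_mono unfolding uf_succ_def by blast
    qed
  next
    fix A :: "nat set"
    have "{m. m + 1 \<in> - A} = - {m. m + 1 \<in> A}" by blast
    then show "A \<in> uf_succ p \<or> - A \<in> uf_succ p"
      using up uf_compl unfolding uf_succ_def by auto
  qed
  have "islim (uf_succ p) y (\<phi> L)"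
    using lim2 unfolding islim_def uf_succ_def by (simp add: y_def)
  then have "comp_ulim f (uf_succ p) x = \<phi> L"
    unfolding comp_ulim_def yeq by (rule plim_eq[OF uf2])
  then show "\<phi> (comp_ulim f p x) = comp_ulim f (uf_succ p) x" using pL by simp
qed

end
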